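(* If $\mathcal{O}$ is a set of upwards closed modalities, then for all $r,r'\in TT\mathbf{1}$ the following are equivalent: (1) $r\preccurlyeq r'$; (2) for all $A\subseteq T\mathbf{1}$, $r[\in A]\trianglelefteq r'[\in {\trianglelefteq}[A]]$; (3) for all $o\in\mathcal{O}$ and all $A\subseteq T\mathbf{1}$, $r\in o(A)$ implies $r'\in o({\trianglelefteq}[A])$.
   Context: $\Sigma$ is a signature of effect operations with arities $\alpha^n\to\alpha$, $\mathbf{N}\times\alpha^n\to\alpha$, $\alpha^{\mathbf{N}}\to\alpha$ or $\mathbf{N}\times\alpha^{\mathbf{N}}\to\alpha$. $TX$ is the set of possibly infinite labelled trees with leaves $\bot$ or elements of $X$ and internal nodes labelled by operations (or $\sigma_m$, $m\in\mathbb{N}$) with children according to arity; $t\le t'$ iff $t$ is obtained from $t'$ by replacing subtrees with $\bot$. $\mathbf{1}=\{*\}$. A set $\mathcal{O}$ of modalities is given with $[\![o]\!]\subseteq T\mathbf{1}$; $o$ is upwards closed if $[\![o]\!]$ is upward closed under $\le$. For $t\in TX$, $P\subseteq X$, $t[\in P]\in T\mathbf{1}$ replaces leaves in $P$ by $*$ and other $X$-leaves by $\bot$; $o(A)=\{t\in TX\mid t[\in A]\in[\![o]\!]\}$. $\mathcal{T}$ is the least class of formulas containing $o(\top),o(\bot)$ ($o\in\mathcal{O}$) closed under arbitrary $\bigvee,\bigwedge$, with $[\![o(\top)]\!]=o(\{*\})$, $[\![o(\bot)]\!]=o(\emptyset)$, unions/intersections. On $T\mathbf{1}$: $t\trianglelefteq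 t'$ iff $\forall\Phi\in\mathcal{T}$, $t\in[\![\Phi]\!]\Rightarrow t'\in[\![\Phi]\!]$. On $TT\mathbf{1}$: $r\preccurlyeq r'$ iff $\forall o\in\mathcal{O}\,\forall\Phi\in\mathcal{T}$, $r\in o([\![\Phi]\!])\Rightarrow r'\in o([\![\Phi]\!])$. For a relation $R$ and set $A$, $R[A]=\{y\mid\exists x\in A,\ xRy\}$. *)

theory Defs
  imports Main "HOL-Library.Extended_Nat"
begin

text \<open>Node labels of type 'l range over all
  operation symbols of the signature, where an operation with a natural-number
  parameter (arity N x alpha^n -> alpha or N x alpha^N -> alpha) contributes one
  label per parameter value, together with the labels sigma_m. The arity of a label
  is given by ar :: 'l => enat (a natural number n, or infinity for alpha^N).
  Children are indexed by nat; children outside the arity are required to be Bot.\<close>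

codatatype (labels: 'l, leaves: 'x) tree =
    Bot
  | Leaf 'x
  | Node 'l "nat \<Rightarrow> ('l, 'x) tree"

coinductive wf_tree :: "('l \<Rightarrow> enat) \<Rightarrow> ('l, 'x) tree \<Rightarrow> bool" for ar where
  wf_Bot: "wf_tree ar Bot"
| wf_Leaf: "wf_tree ar (Leaf x)"
| wf_Node: "(\<And>i. enat i < ar l \<Longrightarrow> wf_tree ar (ts i)) \<Longrightarrow>
            (\<And>i. ar l \<le> enat i \<Longrightarrow> ts i = Bot) \<Longrightarrow> wf_tree ar (Node l ts)"

definition Tset :: "('l \<Rightarrow> enat) \<Rightarrow> 'x set \<Rightarrow> ('l, 'x) tree set" where
  "Tset ar X = {t. wf_tree ar t \<and> leaves t \<subseteq> X}"

abbreviation T1 :: "('l \<Rightarrow> enat) \<Rightarrow> ('l, unit) tree set" where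
  "T1 ar \<equiv> Tset ar UNIV"

coinductive tree_le :: "('l, 'x) tree \<Rightarrow> ('l, 'x) tree \<Rightarrow> bool" where
  le_Bot: "tree_le Bot t"
| le_Leaf: "tree_le (Leaf x) (Leaf x)"
| le_Node: "(\<And>i. tree_le (ts i) (ts' i)) \<Longrightarrow> tree_le (Node l ts) (Node l ts')"

primcorec restr :: "'x set \<Rightarrow> ('l, 'x) tree \<Rightarrow> ('l, unit) tree" where
  "restr P t = (case t of
      Bot \<Rightarrow> Bot
    | Leaf x \<Rightarrow> (if x \<in> P then Leaf () else Bot)
    | Node l ts \<Rightarrow> Node l (\<lambda>i. restr P (ts i)))"

definition modal :: "('l \<Rightarrow> enat) \<Rightarrow> 'x set \<Rightarrow> ('m \<Rightarrow> ('l, unit) tree set) \<Rightarrow> 'm \<Rightarrow> 'x set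
                     \<Rightarrow> ('l, 'x) tree set" where
  "modal ar X sem \<mu> A = {t \<in> Tset ar X. restr A t \<in> sem \<mu>}"

definition upwards_closed :: "('l \<Rightarrow> enat) \<Rightarrow> ('m \<Rightarrow> ('l, unit) tree set) \<Rightarrow> 'm \<Rightarrow> bool" where
  "upwards_closed ar sem \<mu> \<longleftrightarrow>
     (\<forall>t t'. t \<in> sem \<mu> \<longrightarrow> t' \<in> T1 ar \<longrightarrow> tree_le t t' \<longrightarrow> t' \<in> sem \<mu>)"

text \<open>Denotations of the formulas in the class \<T> (subsets of T 1).\<close>
inductive_set Fml :: "('l \<Rightarrow> enat) \<Rightarrow> 'm set \<Rightarrow> ('m \<Rightarrow> ('l, unit) tree set)
                      \<Rightarrow> ('l, unit) tree set set" for ar Mods sem where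
  Fml_top: "\<mu> \<in> Mods \<Longrightarrow> modal ar UNIV sem \<mu> {()} \<in> Fml ar Mods sem"
| Fml_bot: "\<mu> \<in> Mods \<Longrightarrow> modal ar UNIV sem \<mu> {} \<in> Fml ar Mods sem"
| Fml_Or: "(\<And>\<Phi>. \<Phi> \<in> S \<Longrightarrow> \<Phi> \<in> Fml ar Mods sem) \<Longrightarrow> \<Union> S \<in> Fml ar Mods sem"
| Fml_And: "(\<And>\<Phi>. \<Phi> \<in> S \<Longrightarrow> \<Phi> \<in> Fml ar Mods sem) \<Longrightarrow> T1 ar \<inter> \<Inter> S \<in> Fml ar Mods sem"

definition tri :: "('l \<Rightarrow> enat) \<Rightarrow> 'm set \<Rightarrow> ('m \<Rightarrow> ('l, unit) tree set)
                   \<Rightarrow> ('l, unit) tree \<Rightarrow> ('l, unit) tree \<Rightarrow> bool" where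
  "tri ar Mods sem t t' \<longleftrightarrow> t \<in> T1 ar \<and> t' \<in> T1 ar \<and>
     (\<forall>\<Phi> \<in> Fml ar Mods sem. t \<in> \<Phi> \<longrightarrow> t' \<in> \<Phi>)"

definition tri_img :: "('l \<Rightarrow> enat) \<Rightarrow> 'm set \<Rightarrow> ('m \<Rightarrow> ('l, unit) tree set)
                   \<Rightarrow> ('l, unit) tree set \<Rightarrow> ('l, unit) tree set" where
  "tri_img ar Mods sem A = {y. \<exists>x \<in> A. tri ar Mods sem x y}"

definition prec :: "('l \<Rightarrow> enat) \<Rightarrow> 'm set \<Rightarrow> ('m \<Rightarrow> ('l, unit) tree set)
                   \<Rightarrow> ('l, ('l, unit) tree) tree \<Rightarrow> ('l, ('l, unit) tree) tree \<Rightarrow> bool" where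
  "prec ar Mods sem r r' \<longleftrightarrow>
     (\<forall>\<mu> \<in> Mods. \<forall>\<Phi> \<in> Fml ar Mods sem.
        r \<in> modal ar (T1 ar) sem \<mu> \<Phi> \<longrightarrow> r' \<in> modal ar (T1 ar) sem \<mu> \<Phi>)"

end

theory Submission
  imports Defs
begin
lemma restr_Bot[simp]: "restr P Bot = Bot" by (subst restr.code) simp
lemma restr_Leaf[simp]: "restr P (Leaf x) = (if x \<in> P then Leaf () else Bot)" by (subst restr.code) simp
lemma restr_Node[simp]: "restr P (Node l ts) = Node l (\<lambda>i. restr P (ts i))" by (subst restr.code) simp

lemma wf_restr: "wf_tree ar t \<Longrightarrow> wf_tree ar (restr P t)"
proof (coinduction arbitrary: t)
  case wf_tree
  then show ?case by (cases rule: wf_tree.cases) auto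
qed

lemma le_restr: "A \<subseteq> B \<Longrightarrow> tree_le (restr A t) (restr B t)"
proof (coinduction arbitrary: t)
  case tree_le
  then show ?case by (cases t) auto
qed

lemma restr_id: "restr {()} t = t"
proof (coinduction arbitrary: t)
  case Eq_tree
  then show ?case by (cases t) auto
qed

lemma restr_empty: "restr {} (restr A t) = restr {} t"
proof (coinduction arbitrary: t)
  case Eq_tree
  then show ?case by (cases t) auto
qed

theorem lemma4p14:
  fixes ar :: "'l \<Rightarrow> enat"
    and Mods :: "'m set"
    and sem :: "'m \<Rightarrow> ('l, unit) tree set"
    and r r' :: "('l, ('l, unit) tree) tree"
  assumes sem_T1: "\<forall>\<mu> \<in> Mods. sem \<mu> \<subseteq> T1 ar"
    and up: "\<forall>\<mu> \<in> Mods. upwards_closed ar sem \<mu>"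
    and r: "r \<in> Tset ar (T1 ar)"
    and r': "r' \<in> Tset ar (T1 ar)"
  shows "(prec ar Mods sem r r'
            \<longleftrightarrow> (\<forall>A \<subseteq> T1 ar. tri ar Mods sem (restr A r) (restr (tri_img ar Mods sem A) r')))
       \<and> (prec ar Mods sem r r'
            \<longleftrightarrow> (\<forall>\<mu> \<in> Mods. \<forall>A \<subseteq> T1 ar.
                   r \<in> modal ar (T1 ar) sem \<mu> A \<longrightarrow> r' \<in> modal ar (T1 ar) sem \<mu> (tri_img ar Mods sem A)))"
proof -
  let ?F = "Fml ar Mods sem"
  let ?TI = "tri_img ar Mods sem"
  let ?M = "modal ar (T1 ar) sem"
  have wfr: "wf_tree ar r" "wf_tree ar r'" using r r' by (auto simp: Tset_def)
  have rT1: "\<And>P t. wf_tree ar t \<Longrightarrow> restr P t \<in> T1 ar"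
    by (auto simp: Tset_def wf_restr)
  have Fsub: "\<Phi> \<subseteq> T1 ar" if "\<Phi> \<in> ?F" for \<Phi>
    using that by induct (auto simp: modal_def)
  have Fcl: "y \<in> \<Phi>" if "\<Phi> \<in> ?F" "x \<in> \<Phi>" "tri ar Mods sem x y" for \<Phi> x y
    using that by (auto simp: tri_def)
  have trirefl: "tri ar Mods sem x x" if "x \<in> T1 ar" for x
    using that by (auto simp: tri_def)
  have TIF: "?TI \<Phi> = \<Phi>" if "\<Phi> \<in> ?F" for \<Phi>
    using Fcl[OF that] trirefl Fsub[OF that] unfolding tri_img_def by blast
  have ATI: "A \<subseteq> ?TI A" if "A \<subseteq> T1 ar" for A
    using that trirefl by (auto simp: tri_img_def)
  have TIinF: "?TI A \<in> ?F" if "A \<subseteq> T1 ar" for A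
  proof -
    have "?TI A = \<Union> ((\<lambda>a. T1 ar \<inter> \<Inter> {\<Phi> \<in> ?F. a \<in> \<Phi>}) ` A)"
      using that by (auto simp: tri_img_def tri_def)
    also have "\<dots> \<in> ?F"
      by (rule Fml_Or) (auto intro: Fml_And)
    finally show ?thesis .
  qed
  have M: "t \<in> ?M \<mu> A \<longleftrightarrow> t \<in> Tset ar (T1 ar) \<and> restr A t \<in> sem \<mu>" for t \<mu> A
    by (simp add: modal_def)
  have P13: "(\<forall>\<mu> \<in> Mods. \<forall>A \<subseteq> T1 ar. r \<in> ?M \<mu> A \<longrightarrow> r' \<in> ?M \<mu> (?TI A))"
    if p: "prec ar Mods sem r r'"
  proof (intro ballI allI impI)
    fix \<mu> A assume mu: "\<mu> \<in> Mods" and A: "A \<subseteq> T1 ar" and rA: "r \<in> ?M \<mu> A"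
    have "restr (?TI A) r \<in> sem \<mu>"
      using up mu rA rT1[OF wfr(1)] le_restr[OF ATI[OF A]]
      unfolding upwards_closed_def M by blast
    then have "r \<in> ?M \<mu> (?TI A)" using r M by blast
    then show "r' \<in> ?M \<mu> (?TI A)" using p mu TIinF[OF A] unfolding prec_def by blast
  qed
  have P31: "prec ar Mods sem r r'"
    if h: "\<forall>\<mu> \<in> Mods. \<forall>A \<subseteq> T1 ar. r \<in> ?M \<mu> A \<longrightarrow> r' \<in> ?M \<mu> (?TI A)"
    unfolding prec_def
  proof (intro ballI impI)
    fix \<mu> \<Phi> assume mu: "\<mu> \<in> Mods" and F: "\<Phi> \<in> ?F" and rP: "r \<in> ?M \<mu> \<Phi>"
    show "r' \<in> ?M \<mu> \<Phi>" using h mu Fsub[OF F] rP TIF[OF F] by metis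
  qed
  have P23: "(\<forall>\<mu> \<in> Mods. \<forall>A \<subseteq> T1 ar. r \<in> ?M \<mu> A \<longrightarrow> r' \<in> ?M \<mu> (?TI A))"
    if h: "\<forall>A \<subseteq> T1 ar. tri ar Mods sem (restr A r) (restr (?TI A) r')"
  proof (intro ballI allI impI)
    fix \<mu> A assume mu: "\<mu> \<in> Mods" and A: "A \<subseteq> T1 ar" and rA: "r \<in> ?M \<mu> A"
    have top: "modal ar UNIV sem \<mu> {()} \<in> ?F" using mu by (rule Fml_top)
    have "restr A r \<in> modal ar UNIV sem \<mu> {()}"
      using rA rT1[OF wfr(1)] by (simp add: modal_def restr_id)
    then have "restr (?TI A) r' \<in> modal ar UNIV sem \<mu> {()}"
      using h A top unfolding tri_def by blast
    then have "restr (?TI A) r' \<in> sem \<mu>" by (simp add: modal_def restr_id)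
    then show "r' \<in> ?M \<mu> (?TI A)" using r' M by blast
  qed
  have P32: "\<forall>A \<subseteq> T1 ar. tri ar Mods sem (restr A r) (restr (?TI A) r')"
    if h: "\<forall>\<mu> \<in> Mods. \<forall>A \<subseteq> T1 ar. r \<in> ?M \<mu> A \<longrightarrow> r' \<in> ?M \<mu> (?TI A)"
  proof (intro allI impI)
    fix A assume A: "A \<subseteq> T1 ar"
    have "\<Phi> \<in> ?F \<Longrightarrow> restr A r \<in> \<Phi> \<longrightarrow> restr (?TI A) r' \<in> \<Phi>" for \<Phi>
    proof (induct rule: Fml.induct)
      case (Fml_top \<mu>)
      show ?case
      proof
        assume "restr A r \<in> modal ar UNIV sem \<mu> {()}"
        then have "r \<in> ?M \<mu> A" using r by (simp add: modal_def restr_id)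
        then have "r' \<in> ?M \<mu> (?TI A)" using h Fml_top A by blast
        then show "restr (?TI A) r' \<in> modal ar UNIV sem \<mu> {()}"
          using rT1[OF wfr(2)] by (simp add: modal_def restr_id)
      qed
    next
      case (Fml_bot \<mu>)
      show ?case
      proof
        assume "restr A r \<in> modal ar UNIV sem \<mu> {}"
        then have "r \<in> ?M \<mu> {}" using r by (simp add: modal_def restr_empty)
        then have "r' \<in> ?M \<mu> (?TI {})" using h Fml_bot by blast
        moreover have "?TI {} = {}" by (simp add: tri_img_def)
        ultimately show "restr (?TI A) r' \<in> modal ar UNIV sem \<mu> {}"
          using rT1[OF wfr(2)] by (simp add: modal_def restr_empty)
      qed
    next
      case (Fml_Or S)
      then show ?case by blast
    next
      case (Fml_And S)
      then show ?case using rT1[OF wfr(2)] by blast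
    qed
    then show "tri ar Mods sem (restr A r) (restr (?TI A) r')"
      unfolding tri_def using rT1 wfr by blast
  qed
  show ?thesis using P13 P31 P23 P32 by blast
qed

end
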